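(* Assume the setting in the context, and let $\mathbf d^*$ be any $\Phi_{\mathfrak B}$-optimal design with $\boldsymbol\Sigma^*=\mathbf M(\mathbf d^* )^{-1}=(c^*_{jk})$. Then for all $j,k\in\{1,\dots,m\}$: $$|c^*_{jk}|\le \alpha K\big[(\mathbf B\mathbf B')^{-1}_{jj}(\mathbf B\mathbf B')^{-1}_{kk}\big]^{1/2},$$ $$|c^*_{jk}|\le \alpha\big[\mathbf N^+_{jj}(\mathbf w^{(j+)})\,\mathbf N^+_{kk}(\mathbf w^{(k+)})\big]^{1/2},$$ $$|c^*_{jk}|\le \alpha\big[\mathbf N^+_{jj}(\mathbf w^{(j* )})\,\mathbf N^+_{kk}(\mathbf w^{(k* )})\big]^{1/2},$$ where $\mathbf A_{ij}$ denotes the $(i,j)$ entry of a matrix $\mathbf A$.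
   Context: Let $n,m,N,K$ be positive integers with $2\le m\le N\le n$, and let $\mathbf f_1,\dots,\mathbf f_n\in\mathbb R^m$ span $\mathbb R^m$. A (binary) design is $\mathbf d\in\{0,1\}^n$ with $\sum_i d_i=N$; its information matrix is $\mathbf M(\mathbf d)=\sum_{i=1}^n d_i\mathbf f_i\mathbf f_i'$. For $\ell\in\{1,\dots,K\}$ let $\mathbf B_\ell$ be a real $m\times s_\ell$ matrix, $\mathbf B=(\mathbf B_1,\dots,\mathbf B_K)$, with column space of $\mathbf B$ equal to $\mathbb R^m$ and no zero column. For positive definite $\mathbf M$, $\Phi_{\mathfrak B}(\mathbf M)=\max_{\ell}\mathrm{tr}(\mathbf B_\ell'\mathbf M^{-1}\mathbf B_\ell)$. A $\Phi_{\mathfrak B}$-optimal design minimizes $\Phi_{\mathfrak B}(\mathbf M(\mathbf d))$ over designs $\mathbf d$ with nonsingular $\mathbf M(\mathbf d)$. Let $\mathbf d_0$ be a design with nonsingular $\mathbf M(\mathbf d_0)$ and $\alpha=\Phi_{\mathfrak B}(\mathbf M(\mathbf d_0))$. For $\mathbf w\in\mathbb R^K$, $\mathbf w\ge 0$, $\sum w_\ell=1$, let $\mathbf N(\mathbf w)=\sum_\ell w_\ell\mathbf B_\ell\mathbf B_\ell'$; $\mathbf A^+$ is the Moore–Penrose pseudoinverse and $\mathbf e_j$ the $j$-th unit vector. For $j\in\{1,\dots,m\}$: write $\mathbf B^+\mathbf e_j=((\mathbf h^{(j+)}_1)',\dots,(\mathbf h^{(j+)}_K)')'$ with $\mathbf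 h^{(j+)}_\ell\in\mathbb R^{s_\ell}$, and set $w^{(j+)}_\ell=\|\mathbf h^{(j+)}_\ell\|/\sum_{t}\|\mathbf h^{(j+)}_t\|$; $\mathbf w^{(j* )}$ is a minimizer of $\mathbf e_j'\mathbf N^+(\mathbf w)\mathbf e_j$ over all such $\mathbf w$ with $\mathbf e_j\in\mathcal C(\mathbf N(\mathbf w))$. *)

theory Defs
  imports "HOL-Analysis.Analysis"
begin

text \<open>Setting. The support points f_1..f_n are indexed by a finite type 'n,
  the ambient space R^m is real^'m. The concatenated matrix B = (B_1,...,B_K)
  is an m x S matrix with columns indexed by a finite type 'c; the map
  blk :: 'c => 'k assigns each column to its block (the blocks are the types 'k,
  K = CARD('k)); B_l consists of the columns c with blk c = l.\<close>

definition outer :: "real^'m \<Rightarrow> real^'m \<Rightarrow> real^'m^'m" where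
  "outer x y = (\<chi> i j. x $ i * y $ j)"

text \<open>Binary designs: d \<in> {0,1}^n with sum d = N, represented by the support set.\<close>
definition is_design :: "nat \<Rightarrow> ('n::finite \<Rightarrow> bool) \<Rightarrow> bool" where
  "is_design N d \<longleftrightarrow> card {i. d i} = N"

definition info_mat :: "('n::finite \<Rightarrow> real^'m) \<Rightarrow> ('n \<Rightarrow> bool) \<Rightarrow> real^'m^'m" where
  "info_mat f d = (\<Sum>i\<in>{i. d i}. outer (f i) (f i))"

text \<open>Moore-Penrose pseudoinverse: the unique matrix satisfying the Penrose equations.\<close>
definition pinv :: "real^'b^'a \<Rightarrow> real^'a^'b" where
  "pinv A = (THE X. A ** X ** A = A \<and> X ** A ** X = X \<and>
                   transpose (A ** X) = A ** X \<and> transpose (X ** A) = X ** A)"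

text \<open>tr(B_l' M^{-1} B_l) = sum over columns b of B_l of b' M^{-1} b.\<close>
definition block_trace :: "real^'c^'m \<Rightarrow> ('c::finite \<Rightarrow> 'k) \<Rightarrow> 'k \<Rightarrow> real^'m^'m \<Rightarrow> real" where
  "block_trace B blk l M = (\<Sum>c\<in>{c. blk c = l}. column c B \<bullet> (matrix_inv M *v column c B))"

definition Phi :: "real^'c^'m \<Rightarrow> ('c::finite \<Rightarrow> 'k::finite) \<Rightarrow> real^'m^'m \<Rightarrow> real" where
  "Phi B blk M = Max ((\<lambda>l. block_trace B blk l M) ` UNIV)"

definition Phi_optimal :: "real^'c^'m \<Rightarrow> ('c::finite \<Rightarrow> 'k::finite) \<Rightarrow> ('n::finite \<Rightarrow> real^'m)
     \<Rightarrow> nat \<Rightarrow> ('n \<Rightarrow> bool) \<Rightarrow> bool" where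
  "Phi_optimal B blk f N d \<longleftrightarrow> is_design N d \<and> invertible (info_mat f d) \<and>
     (\<forall>d'. is_design N d' \<and> invertible (info_mat f d') \<longrightarrow>
        Phi B blk (info_mat f d) \<le> Phi B blk (info_mat f d'))"

definition weight :: "('k::finite \<Rightarrow> real) \<Rightarrow> bool" where
  "weight w \<longleftrightarrow> (\<forall>l. w l \<ge> 0) \<and> sum w UNIV = 1"

text \<open>N(w) = sum_l w_l B_l B_l'.\<close>
definition Nmat :: "real^'c^'m \<Rightarrow> ('c::finite \<Rightarrow> 'k::finite) \<Rightarrow> ('k \<Rightarrow> real) \<Rightarrow> real^'m^'m" where
  "Nmat B blk w = (\<Sum>l\<in>UNIV. w l *\<^sub>R (\<Sum>c\<in>{c. blk c = l}. outer (column c B) (column c B)))"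

text \<open>||h_l^{(j+)}|| where B^+ e_j = (h_1', ..., h_K')'.\<close>
definition hnorm :: "real^'c^'m \<Rightarrow> ('c::finite \<Rightarrow> 'k) \<Rightarrow> 'm \<Rightarrow> 'k \<Rightarrow> real" where
  "hnorm B blk j l = sqrt (\<Sum>c\<in>{c. blk c = l}. ((pinv B *v axis j 1) $ c)\<^sup>2)"

definition w_plus :: "real^'c^'m \<Rightarrow> ('c::finite \<Rightarrow> 'k::finite) \<Rightarrow> 'm \<Rightarrow> 'k \<Rightarrow> real" where
  "w_plus B blk j l = hnorm B blk j l / (\<Sum>t\<in>UNIV. hnorm B blk j t)"

text \<open>w is a minimizer of e_j' N^+(w) e_j over weights w with e_j in the column space of N(w).\<close>
definition is_w_star :: "real^'c^'m \<Rightarrow> ('c::finite \<Rightarrow> 'k::finite) \<Rightarrow> 'm \<Rightarrow> ('k \<Rightarrow> real) \<Rightarrow> bool" where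
  "is_w_star B blk j w \<longleftrightarrow> weight w \<and> axis j 1 \<in> range ((*v) (Nmat B blk w)) \<and>
     (\<forall>w'. weight w' \<and> axis j 1 \<in> range ((*v) (Nmat B blk w')) \<longrightarrow>
        axis j 1 \<bullet> (pinv (Nmat B blk w) *v axis j 1) \<le> axis j 1 \<bullet> (pinv (Nmat B blk w') *v axis j 1))"

end

theory Submission
  imports Defs
begin

definition penrose :: "real^'b^'a \<Rightarrow> real^'a^'b \<Rightarrow> bool" where
  "penrose A X \<longleftrightarrow> A ** X ** A = A \<and> X ** A ** X = X \<and>
                   transpose (A ** X) = A ** X \<and> transpose (X ** A) = X ** A"

lemma penrose_unique:
  assumes X: "penrose A X" and Y: "penrose A Y" shows "X = Y"
proof -
  have x1: "A ** X ** A = A" and x2: "X ** A ** X = X" and x3: "transpose (A ** X) = A ** X"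
    and x4: "transpose (X ** A) = X ** A" using X unfolding penrose_def by auto
  have y1: "A ** Y ** A = A" and y2: "Y ** A ** Y = Y" and y3: "transpose (A ** Y) = A ** Y"
    and y4: "transpose (Y ** A) = Y ** A" using Y unfolding penrose_def by auto
  have "X = X ** (A ** X)" using x2 by (simp add: matrix_mul_assoc)
  also have "\<dots> = X ** transpose (A ** X)" using x3 by simp
  also have "\<dots> = X ** transpose X ** transpose A" by (simp add: matrix_transpose_mul matrix_mul_assoc)
  also have "\<dots> = X ** transpose X ** transpose (A ** Y ** A)" using y1 by simp
  also have "\<dots> = X ** transpose X ** transpose A ** transpose (A ** Y)"
    by (simp add: matrix_transpose_mul matrix_mul_assoc)
  also have "\<dots> = X ** transpose (A ** X) ** (A ** Y)" using y3
    by (simp add: matrix_transpose_mul matrix_mul_assoc)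
  also have "\<dots> = X ** A ** Y" using x3 x2 by (simp add: matrix_mul_assoc)
  finally have 1: "X = X ** A ** Y" .
  have "Y = (Y ** A) ** Y" using y2 by (simp add: matrix_mul_assoc)
  also have "\<dots> = transpose (Y ** A) ** Y" using y4 by simp
  also have "\<dots> = transpose A ** transpose Y ** Y" by (simp add: matrix_transpose_mul matrix_mul_assoc)
  also have "\<dots> = transpose (A ** X ** A) ** transpose Y ** Y" using x1 by simp
  also have "\<dots> = transpose (X ** A) ** transpose A ** transpose Y ** Y"
    by (simp add: matrix_transpose_mul matrix_mul_assoc)
  also have "\<dots> = (X ** A) ** transpose (Y ** A) ** Y" using x4
    by (simp add: matrix_transpose_mul matrix_mul_assoc)
  also have "\<dots> = X ** A ** (Y ** A ** Y)" using y4 by (simp add: matrix_mul_assoc)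
  also have "\<dots> = X ** A ** Y" using y2 by simp
  finally show ?thesis using 1 by simp
qed

lemma pinv_eq: assumes "penrose A X" shows "pinv A = X"
  unfolding pinv_def
  apply (rule the_equality)
  using assms penrose_unique unfolding penrose_def by blast+

lemma sym_mat_inner:
  fixes A :: "real^'m^'m"
  assumes "transpose A = A" shows "(A *v u) \<bullet> v = u \<bullet> (A *v v)"
proof -
  have "(u v* A) \<bullet> v = u \<bullet> (A *v v)" by (rule dot_lmul_matrix)
  moreover have "u v* A = A *v u" using assms by (metis transpose_matrix_vector)
  ultimately show ?thesis by simp
qed

lemma inner_sym_mat:
  fixes A :: "real^'m^'m"
  assumes "\<And>u v. (A *v u) \<bullet> v = u \<bullet> (A *v v)" shows "transpose A = A"
proof -
  have "transpose A *v x = A *v x" for x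
  proof -
    have "(transpose A *v x) \<bullet> v = (A *v x) \<bullet> v" for v
    proof -
      have "(transpose A *v x) \<bullet> v = x \<bullet> (A *v v)" by (simp add: dot_lmul_matrix)
      also have "\<dots> = (A *v x) \<bullet> v" using assms by simp
      finally show ?thesis .
    qed
    then show ?thesis by (metis vector_eq_rdot)
  qed
  then show ?thesis by (simp add: matrix_eq)
qed

definition proj :: "(real^'m) set \<Rightarrow> real^'m \<Rightarrow> real^'m" where
  "proj S y = (THE p. p \<in> S \<and> (\<forall>w\<in>S. (y - p) \<bullet> w = 0))"

lemma proj_ex1:
  fixes S :: "(real^'m) set"
  assumes "subspace S" shows "\<exists>!p. p \<in> S \<and> (\<forall>w\<in>S. (y - p) \<bullet> w = 0)"
proof -
  obtain p z where p: "p \<in> span S" and z: "\<And>w. w \<in> span S \<Longrightarrow> orthogonal z w" and yz: "y = p + z"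
    using orthogonal_subspace_decomp_exists[of S y] by metis
  have sp: "span S = S" using assms by simp
  have ex: "p \<in> S \<and> (\<forall>w\<in>S. (y - p) \<bullet> w = 0)"
  proof
    show "p \<in> S" using p sp by simp
    show "\<forall>w\<in>S. (y - p) \<bullet> w = 0"
    proof
      fix w assume "w \<in> S"
      then have "orthogonal z w" using z sp by simp
      then show "(y - p) \<bullet> w = 0" using yz by (simp add: orthogonal_def)
    qed
  qed
  show ?thesis
  proof (rule ex1I[of _ p])
    show "p \<in> S \<and> (\<forall>w\<in>S. (y - p) \<bullet> w = 0)" by (rule ex)
    fix q assume q: "q \<in> S \<and> (\<forall>w\<in>S. (y - q) \<bullet> w = 0)"
    have d: "p - q \<in> S" using q ex assms by (simp add: subspace_diff)
    have "(p - q) \<bullet> (p - q) = (y - q) \<bullet> (p - q) - (y - p) \<bullet> (p - q)"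
      by (simp add: inner_diff_left)
    also have "\<dots> = 0" using q ex d by simp
    finally show "q = p" by simp
  qed
qed

lemma proj_prop:
  assumes "subspace S"
  shows "proj S y \<in> S" "\<And>w. w \<in> S \<Longrightarrow> (y - proj S y) \<bullet> w = 0"
  using theI'[OF proj_ex1[OF assms, of y]] unfolding proj_def by auto

lemma proj_eqI:
  assumes "subspace S" "p \<in> S" "\<And>w. w \<in> S \<Longrightarrow> (y - p) \<bullet> w = 0"
  shows "proj S y = p"
proof -
  have a: "p \<in> S \<and> (\<forall>w\<in>S. (y - p) \<bullet> w = 0)" using assms by blast
  have b: "proj S y \<in> S \<and> (\<forall>w\<in>S. (y - proj S y) \<bullet> w = 0)" using proj_prop[OF assms(1), where y=y] by blast
  show ?thesis using proj_ex1[OF assms(1), of y] a b by (metis (no_types, lifting))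
qed

lemma proj_id: assumes "subspace S" "p \<in> S" shows "proj S p = p"
  by (rule proj_eqI) (use assms in auto)

lemma proj_add: assumes "subspace S" shows "proj S (a + b) = proj S a + proj S b"
proof (rule proj_eqI[OF assms])
  show "proj S a + proj S b \<in> S" using proj_prop[OF assms] assms by (simp add: subspace_add)
  fix w assume w: "w \<in> S"
  have "(a + b - (proj S a + proj S b)) \<bullet> w = (a - proj S a) \<bullet> w + (b - proj S b) \<bullet> w"
    by (simp add: algebra_simps inner_add_left inner_diff_left)
  then show "(a + b - (proj S a + proj S b)) \<bullet> w = 0" using proj_prop(2)[OF assms w] by simp
qed

lemma proj_scale: assumes "subspace S" shows "proj S (c *\<^sub>R a) = c *\<^sub>R proj S a"
proof (rule proj_eqI[OF assms])
  show "c *\<^sub>R proj S a \<in> S" using proj_prop[OF assms] assms by (simp add: subspace_scale)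
  fix w assume w: "w \<in> S"
  have "(c *\<^sub>R a - c *\<^sub>R proj S a) \<bullet> w = c * ((a - proj S a) \<bullet> w)"
    by (simp add: algebra_simps inner_diff_left)
  then show "(c *\<^sub>R a - c *\<^sub>R proj S a) \<bullet> w = 0" using proj_prop(2)[OF assms w] by simp
qed

lemma proj_sym: assumes "subspace S" shows "proj S u \<bullet> v = u \<bullet> proj S v"
proof -
  have "proj S u \<bullet> v = proj S u \<bullet> proj S v + proj S u \<bullet> (v - proj S v)"
    by (simp add: inner_diff_right)
  also have "proj S u \<bullet> (v - proj S v) = 0"
    using proj_prop[OF assms] by (simp add: inner_commute)
  also have "u \<bullet> proj S v = proj S u \<bullet> proj S v + (u - proj S u) \<bullet> proj S v"
    by (simp add: inner_diff_left)
  moreover have "(u - proj S u) \<bullet> proj S v = 0"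
    using proj_prop[OF assms] by simp
  ultimately show ?thesis by simp
qed

lemma penrose_sym_exists:
  fixes N :: "real^'m^'m"
  assumes symN: "transpose N = N"
  shows "\<exists>X. penrose N X"
proof -
  define R where "R = range ((*v) N)"
  have subR: "subspace R" unfolding R_def
    using linear_subspace_image[OF matrix_vector_mul_linear[of N] subspace_UNIV] by simp
  have sym: "(N *v u) \<bullet> v = u \<bullet> (N *v v)" for u v by (rule sym_mat_inner[OF symN])
  have NR: "N *v v \<in> R" for v unfolding R_def by auto
  have Nproj: "N *v proj R v = N *v v" for v
  proof -
    have "(N *v (v - proj R v)) \<bullet> u = 0" for u
    proof -
      have "(N *v (v - proj R v)) \<bullet> u = (v - proj R v) \<bullet> (N *v u)" by (rule sym)
      also have "\<dots> = 0" by (rule proj_prop(2)[OF subR NR])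
      finally show ?thesis .
    qed
    then have "(N *v (v - proj R v)) \<bullet> (N *v (v - proj R v)) = 0" by blast
    then have "N *v (v - proj R v) = 0" by simp
    then show ?thesis by (simp add: matrix_vector_mult_diff_distrib)
  qed
  have injR: "r1 = r2" if r: "r1 \<in> R" "r2 \<in> R" "N *v r1 = N *v r2" for r1 r2
  proof -
    have "r1 - r2 \<in> R" by (rule subspace_diff[OF subR r(1,2)])
    then obtain u where u: "r1 - r2 = N *v u" unfolding R_def by auto
    have "(r1 - r2) \<bullet> (r1 - r2) = (N *v u) \<bullet> (r1 - r2)" using u by simp
    also have "\<dots> = u \<bullet> (N *v (r1 - r2))" by (rule sym)
    also have "N *v (r1 - r2) = 0" using r(3) by (simp add: matrix_vector_mult_diff_distrib)
    finally show ?thesis by simp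
  qed
  define g where "g y = proj R (SOME v. proj R y = N *v v)" for y
  have g: "g y \<in> R \<and> N *v g y = proj R y" for y
  proof -
    define v0 where "v0 = (SOME v. proj R y = N *v v)"
    have "\<exists>v. proj R y = N *v v" using proj_prop(1)[OF subR, where y=y] unfolding R_def by auto
    then have v0: "proj R y = N *v v0" unfolding v0_def by (rule someI_ex)
    have "g y = proj R v0" unfolding g_def v0_def by simp
    then show ?thesis using proj_prop(1)[OF subR, where y=v0] Nproj[of v0] v0 by simp
  qed
  have gI: "g y = r" if r: "r \<in> R" "N *v r = proj R y" for y r
  proof (rule injR)
    show "g y \<in> R" using g by blast
    show "r \<in> R" by (rule r(1))
    show "N *v g y = N *v r" using g r(2) by simp
  qed
  have lin: "linear g"
  proof (rule linearI)
    fix a b show "g (a + b) = g a + g b"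
    proof (rule gI)
      show "g a + g b \<in> R" using g subspace_add[OF subR] by blast
      show "N *v (g a + g b) = proj R (a + b)"
        using g by (simp add: proj_add[OF subR] matrix_vector_right_distrib)
    qed
  next
    fix c a show "g (c *\<^sub>R a) = c *\<^sub>R g a"
    proof (rule gI)
      show "c *\<^sub>R g a \<in> R" using g subspace_scale[OF subR] by blast
      show "N *v (c *\<^sub>R g a) = proj R (c *\<^sub>R a)"
        using g by (simp add: proj_scale[OF subR] matrix_vector_mult_scaleR)
    qed
  qed
  define X where "X = matrix g"
  have X: "X *v y = g y" for y
    unfolding X_def using lin by (simp add: matrix_works linear_matrix_vector_mul_eq)
  have gN: "g (N *v v) = proj R v" for v
  proof (rule gI)
    show "proj R v \<in> R" by (rule proj_prop(1)[OF subR])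
    show "N *v proj R v = proj R (N *v v)" using Nproj proj_id[OF subR NR] by simp
  qed
  have "penrose N X" unfolding penrose_def
  proof (intro conjI)
    have "(N ** X ** N) *v v = N *v v" for v
      by (simp add: X gN Nproj flip: matrix_vector_mul_assoc)
    then show "N ** X ** N = N" by (simp add: matrix_eq)
    have "(X ** N ** X) *v y = X *v y" for y
    proof -
      have "(X ** N ** X) *v y = g (N *v g y)" by (simp add: X flip: matrix_vector_mul_assoc)
      also have "\<dots> = proj R (g y)" by (rule gN)
      also have "\<dots> = g y" using proj_id[OF subR] g by blast
      finally show ?thesis by (simp add: X)
    qed
    then show "X ** N ** X = X" by (simp add: matrix_eq)
    have "((N ** X) *v u) \<bullet> v = u \<bullet> ((N ** X) *v v)" for u v
      using g by (simp add: X proj_sym[OF subR] flip: matrix_vector_mul_assoc)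
    then show "transpose (N ** X) = N ** X" by (rule inner_sym_mat)
    have "((X ** N) *v u) \<bullet> v = u \<bullet> ((X ** N) *v v)" for u v
      by (simp add: X gN proj_sym[OF subR] flip: matrix_vector_mul_assoc)
    then show "transpose (X ** N) = X ** N" by (rule inner_sym_mat)
  qed
  then show ?thesis by blast
qed

lemma pinv_sym:
  fixes N :: "real^'m^'m"
  assumes "transpose N = N" shows "penrose N (pinv N)"
  using penrose_sym_exists[OF assms] pinv_eq by metis

lemma outer_mv: "outer x y *v v = (y \<bullet> v) *\<^sub>R x"
  by (simp add: outer_def matrix_vector_mult_def vec_eq_iff inner_vec_def sum_distrib_left mult.assoc mult.commute mult.left_commute)

lemma sum_mv: "(sum A S) *v v = (\<Sum>l\<in>S. A l *v v)"
  by (induct S rule: infinite_finite_induct) (auto simp: matrix_vector_mult_add_rdistrib)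

lemma sum_blocks:
  fixes blk :: "'c::finite \<Rightarrow> 'k::finite"
  shows "(\<Sum>l\<in>UNIV. \<Sum>c\<in>{c. blk c = l}. h c) = (\<Sum>c\<in>UNIV. h c)"
  using sum.group[of "UNIV::'c set" "UNIV::'k set" blk h] by simp

lemma Nmat_mv:
  "Nmat B blk w *v v = (\<Sum>c\<in>UNIV. (w (blk c) * (column c B \<bullet> v)) *\<^sub>R column c B)"
proof -
  have "Nmat B blk w *v v = (\<Sum>l\<in>UNIV. \<Sum>c\<in>{c. blk c = l}. (w l * (column c B \<bullet> v)) *\<^sub>R column c B)"
    unfolding Nmat_def
    by (simp add: sum_mv outer_mv scaleR_matrix_vector_assoc[symmetric] scaleR_sum_right)
  also have "\<dots> = (\<Sum>l\<in>UNIV. \<Sum>c\<in>{c. blk c = l}. (w (blk c) * (column c B \<bullet> v)) *\<^sub>R column c B)"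
    by (intro sum.cong) auto
  also have "\<dots> = (\<Sum>c\<in>UNIV. (w (blk c) * (column c B \<bullet> v)) *\<^sub>R column c B)"
    by (rule sum_blocks)
  finally show ?thesis .
qed

lemma Nmat_inner: "u \<bullet> (Nmat B blk w *v v) = (\<Sum>c\<in>UNIV. w (blk c) * (column c B \<bullet> v) * (column c B \<bullet> u))"
  by (simp add: Nmat_mv inner_sum_right inner_commute)

lemma Nmat_sym: "transpose (Nmat B blk w) = Nmat B blk w"
  by (rule inner_sym_mat) (simp add: Nmat_inner inner_commute mult.commute mult.left_commute)

lemma psd_cs:
  fixes S :: "real^'m^'m"
  assumes psd: "\<And>u. 0 \<le> u \<bullet> (S *v u)" and symS: "transpose S = S"
  shows "(u \<bullet> (S *v v))\<^sup>2 \<le> (u \<bullet> (S *v u)) * (v \<bullet> (S *v v))"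
proof -
  define a where "a = u \<bullet> (S *v u)"
  define b where "b = v \<bullet> (S *v v)"
  define c where "c = u \<bullet> (S *v v)"
  have vu: "v \<bullet> (S *v u) = c" unfolding c_def using sym_mat_inner[OF symS, of v u]
    by (simp add: inner_commute)
  have q: "0 \<le> a - 2 * t * c + t\<^sup>2 * b" for t
  proof -
    have "0 \<le> (u - t *\<^sub>R v) \<bullet> (S *v (u - t *\<^sub>R v))" by (rule psd)
    also have "\<dots> = a - 2 * t * c + t\<^sup>2 * b"
      unfolding a_def b_def using vu c_def
      by (simp add: matrix_vector_mult_diff_distrib matrix_scaleR_vector_ac inner_diff_left inner_diff_right
          algebra_simps power2_eq_square scaleR_matrix_vector_assoc[symmetric])
    finally show ?thesis .
  qed
  have b0: "0 \<le> b" unfolding b_def by (rule psd)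
  show ?thesis
  proof (cases "b = 0")
    case True
    have "c = 0"
    proof (rule ccontr)
      assume "c \<noteq> 0"
      have "0 \<le> a - 2 * ((a + 1) / (2 * c)) * c" using q[of "(a + 1) / (2 * c)"] True by simp
      also have "\<dots> = -1" using \<open>c \<noteq> 0\<close> by (simp add: field_simps)
      finally show False by simp
    qed
    then show ?thesis using True by (simp flip: a_def b_def c_def)
  next
    case False
    then have bp: "b > 0" using b0 by simp
    have "0 \<le> a - 2 * (c / b) * c + (c / b)\<^sup>2 * b" by (rule q)
    also have "\<dots> = a - c\<^sup>2 / b" using bp by (simp add: field_simps power2_eq_square)
    finally have "c\<^sup>2 / b \<le> a" by simp
    then have "c\<^sup>2 \<le> a * b" using bp by (simp add: field_simps)
    then show ?thesis by (simp flip: a_def b_def c_def)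
  qed
qed

lemma GL:
  fixes S :: "real^'m^'m" and B :: "real^'c::finite^'m" and blk :: "'c \<Rightarrow> 'k::finite"
  assumes psd: "\<And>u. 0 \<le> u \<bullet> (S *v u)" and symS: "transpose S = S"
    and tr: "\<And>l. (\<Sum>c\<in>{c. blk c = l}. column c B \<bullet> (S *v column c B)) \<le> \<alpha>"
    and w: "weight w" and e: "e \<in> range ((*v) (Nmat B blk w))"
    and X: "Nmat B blk w ** X ** Nmat B blk w = Nmat B blk w"
  shows "e \<bullet> (S *v e) \<le> \<alpha> * (e \<bullet> (X *v e))"
proof -
  define Nm where "Nm = Nmat B blk w"
  define W where "W c = w (blk c)" for c
  define b where "b c = column c B" for c
  have W0: "0 \<le> W c" for c using w unfolding weight_def W_def by auto
  obtain y where y: "e = Nm *v y" using e unfolding Nm_def by auto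
  define x where "x = X *v e"
  have X': "Nm ** (X ** Nm) = Nm" using X unfolding Nm_def by (simp add: matrix_mul_assoc)
  have Nx: "Nm *v x = e" unfolding x_def y
    by (simp add: matrix_vector_mul_assoc X')
  define qe where "qe = e \<bullet> (S *v e)"
  have qe0: "0 \<le> qe" unfolding qe_def by (rule psd)
  define a where "a c = b c \<bullet> x" for c
  define d where "d c = b c \<bullet> (S *v e)" for c
  have qe_eq: "qe = (\<Sum>c\<in>UNIV. W c * a c * d c)"
  proof -
    have "qe = (S *v e) \<bullet> (Nm *v x)" unfolding qe_def using Nx by (simp add: inner_commute)
    also have "\<dots> = (\<Sum>c\<in>UNIV. W c * a c * d c)"
      unfolding Nm_def Nmat_inner W_def a_def d_def b_def by simp
    finally show ?thesis .
  qed
  have xe: "x \<bullet> e = (\<Sum>c\<in>UNIV. W c * (a c)\<^sup>2)"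
  proof -
    have "x \<bullet> e = x \<bullet> (Nm *v x)" using Nx by simp
    also have "\<dots> = (\<Sum>c\<in>UNIV. W c * (a c)\<^sup>2)"
      unfolding Nm_def Nmat_inner W_def a_def b_def by (simp add: power2_eq_square mult.assoc)
    finally show ?thesis .
  qed
  have xe0: "0 \<le> x \<bullet> e" unfolding xe using W0 by (simp add: sum_nonneg)
  have cs: "qe\<^sup>2 \<le> (\<Sum>c\<in>UNIV. W c * (a c)\<^sup>2) * (\<Sum>c\<in>UNIV. W c * (d c)\<^sup>2)"
  proof -
    have "qe = (\<Sum>c\<in>UNIV. (sqrt (W c) * a c) * (sqrt (W c) * d c))"
      unfolding qe_eq using W0 by (intro sum.cong) (auto simp: algebra_simps real_sqrt_mult[symmetric])
    then have "qe\<^sup>2 \<le> (\<Sum>c\<in>UNIV. (sqrt (W c) * a c)\<^sup>2) * (\<Sum>c\<in>UNIV. (sqrt (W c) * d c)\<^sup>2)"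
      using Cauchy_Schwarz_ineq_sum by metis
    also have "\<dots> = (\<Sum>c\<in>UNIV. W c * (a c)\<^sup>2) * (\<Sum>c\<in>UNIV. W c * (d c)\<^sup>2)"
      using W0 by (simp add: power_mult_distrib)
    finally show ?thesis .
  qed
  have dle: "(d c)\<^sup>2 \<le> (b c \<bullet> (S *v b c)) * qe" for c
    unfolding d_def qe_def by (rule psd_cs[OF psd symS])
  have sumq: "(\<Sum>c\<in>UNIV. W c * (b c \<bullet> (S *v b c))) \<le> \<alpha>"
  proof -
    have "(\<Sum>c\<in>UNIV. W c * (b c \<bullet> (S *v b c)))
        = (\<Sum>l\<in>UNIV. \<Sum>c\<in>{c. blk c = l}. W c * (b c \<bullet> (S *v b c)))"
      by (rule sum_blocks[symmetric])
    also have "\<dots> = (\<Sum>l\<in>UNIV. w l * (\<Sum>c\<in>{c. blk c = l}. column c B \<bullet> (S *v column c B)))"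
      unfolding W_def b_def sum_distrib_left by (intro sum.cong) auto
    also have "\<dots> \<le> (\<Sum>l\<in>UNIV. w l * \<alpha>)"
      using w tr unfolding weight_def by (intro sum_mono mult_left_mono) auto
    also have "\<dots> = \<alpha>" using w unfolding weight_def by (simp add: sum_distrib_right[symmetric])
    finally show ?thesis .
  qed
  have "(\<Sum>c\<in>UNIV. W c * (d c)\<^sup>2) \<le> (\<Sum>c\<in>UNIV. W c * ((b c \<bullet> (S *v b c)) * qe))"
    using W0 dle by (intro sum_mono mult_left_mono) auto
  also have "\<dots> = (\<Sum>c\<in>UNIV. W c * (b c \<bullet> (S *v b c))) * qe"
    by (simp add: sum_distrib_right mult.assoc)
  also have "\<dots> \<le> \<alpha> * qe" using sumq qe0 by (rule mult_right_mono)
  finally have dd: "(\<Sum>c\<in>UNIV. W c * (d c)\<^sup>2) \<le> \<alpha> * qe" .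
  have main: "qe\<^sup>2 \<le> (x \<bullet> e) * (\<alpha> * qe)"
    using cs mult_left_mono[OF dd xe0] unfolding xe by linarith
  have alpha0: "0 \<le> \<alpha>"
  proof -
    have "0 \<le> (\<Sum>c\<in>{c. blk c = undefined}. column c B \<bullet> (S *v column c B))"
      using psd by (simp add: sum_nonneg)
    then show ?thesis using tr[of undefined] by linarith
  qed
  have "qe \<le> \<alpha> * (x \<bullet> e)"
  proof (cases "qe = 0")
    case True then show ?thesis using alpha0 xe0 by simp
  next
    case False
    then have "qe > 0" using qe0 by simp
    then show ?thesis using main by (simp add: power2_eq_square algebra_simps)
  qed
  then show ?thesis unfolding qe_def x_def by (simp add: inner_commute)
qed

lemma entry_inner: "axis j 1 \<bullet> ((A::real^'m^'m) *v axis k 1) = A $ j $ k"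
  by (simp add: inner_axis' matrix_vector_mult_basis column_def)

lemma combine:
  fixes S :: "real^'m^'m"
  assumes psd: "\<And>u. 0 \<le> u \<bullet> (S *v u)" and symS: "transpose S = S" and a0: "0 \<le> \<alpha>"
    and j: "S $ j $ j \<le> \<alpha> * p" and k: "S $ k $ k \<le> \<alpha> * q"
  shows "\<bar>S $ j $ k\<bar> \<le> \<alpha> * sqrt (p * q)"
proof -
  have cs: "(S $ j $ k)\<^sup>2 \<le> S $ j $ j * S $ k $ k"
    using psd_cs[OF psd symS, of "axis j 1" "axis k 1"] by (simp add: entry_inner)
  have j0: "0 \<le> S $ j $ j" using psd[of "axis j 1"] by (simp add: entry_inner)
  have k0: "0 \<le> S $ k $ k" using psd[of "axis k 1"] by (simp add: entry_inner)
  have "S $ j $ j * S $ k $ k \<le> (\<alpha> * p) * (\<alpha> * q)"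
    using j k j0 k0 by (intro mult_mono) auto
  with cs have "(S $ j $ k)\<^sup>2 \<le> \<alpha>\<^sup>2 * (p * q)" by (simp add: power2_eq_square algebra_simps)
  then have "sqrt ((S $ j $ k)\<^sup>2) \<le> sqrt (\<alpha>\<^sup>2 * (p * q))" by (rule real_sqrt_le_mono)
  then show ?thesis using a0 by (simp add: real_sqrt_mult)
qed

lemma info_mv: "info_mat f d *v v = (\<Sum>i\<in>{i. d i}. (f i \<bullet> v) *\<^sub>R f i)"
  unfolding info_mat_def by (simp add: sum_mv outer_mv)

lemma info_sym: "transpose (info_mat f d) = info_mat f d"
  by (rule inner_sym_mat) (simp add: info_mv inner_sum_left inner_sum_right inner_commute mult.commute)

lemma info_psd: "0 \<le> u \<bullet> (info_mat f d *v u)"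
  by (simp add: info_mv inner_sum_right sum_nonneg inner_commute)

lemma inv_props:
  fixes M :: "real^'m^'m"
  assumes "invertible M"
  shows "M ** matrix_inv M = mat 1" "matrix_inv M ** M = mat 1"
  using someI_ex[OF assms[unfolded invertible_def]] unfolding matrix_inv_def by auto

lemma inv_sym_psd:
  fixes M :: "real^'m^'m"
  assumes inv: "invertible M" and symM: "transpose M = M" and psdM: "\<And>u. 0 \<le> u \<bullet> (M *v u)"
  shows "transpose (matrix_inv M) = matrix_inv M" "\<And>u. 0 \<le> u \<bullet> (matrix_inv M *v u)"
proof -
  define H where "H = matrix_inv M"
  have MH: "M *v (H *v v) = v" for v using inv_props(1)[OF inv]
    by (simp add: H_def matrix_vector_mul_assoc)
  have "(H *v u) \<bullet> v = u \<bullet> (H *v v)" for u v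
  proof -
    have "(H *v u) \<bullet> v = (H *v u) \<bullet> (M *v (H *v v))" by (simp add: MH)
    also have "\<dots> = (M *v (H *v u)) \<bullet> (H *v v)" by (simp add: sym_mat_inner[OF symM])
    finally show ?thesis by (simp add: MH)
  qed
  then show "transpose (matrix_inv M) = matrix_inv M" unfolding H_def by (rule inner_sym_mat)
  fix u
  have "u \<bullet> (H *v u) = (H *v u) \<bullet> (M *v (H *v u))" by (simp add: MH inner_commute)
  then show "0 \<le> u \<bullet> (matrix_inv M *v u)" using psdM unfolding H_def by simp
qed

lemma penrose_inv:
  assumes "A ** X = mat 1" "X ** A = mat 1" shows "penrose A X"
  using assms unfolding penrose_def by (simp add: matrix_mul_assoc)

lemma BBt_mv: "(B ** transpose B) *v v = (\<Sum>c\<in>UNIV. (column c B \<bullet> v) *\<^sub>R column c (B::real^'c::finite^'m))"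
proof -
  have "(transpose B *v v) $ c = column c B \<bullet> v" for c
    by (simp add: vector_matrix_mult_def column_def inner_vec_def mult.commute)
  then show ?thesis
    by (simp add: matrix_vector_mul_assoc[symmetric] matrix_mult_sum[of B] scalar_mult_eq_scaleR)
qed

lemma BBt_sym: "transpose (B ** transpose B) = B ** transpose (B::real^'c::finite^'m)"
  by (simp add: matrix_transpose_mul)

lemma BBt_inv:
  fixes B :: "real^'c::finite^'m"
  assumes surjB: "range ((*v) B) = UNIV"
  shows "invertible (B ** transpose B)"
proof -
  have "inj ((*v) (B ** transpose B))"
  proof (rule injI)
    fix x y assume "(B ** transpose B) *v x = (B ** transpose B) *v y"
    then have z0: "(B ** transpose B) *v (x - y) = 0" by (simp add: matrix_vector_mult_diff_distrib)
    define z where "z = x - y"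
    have "(transpose B *v z) \<bullet> (transpose B *v z) = z \<bullet> (B *v (transpose B *v z))"
      using dot_lmul_matrix[of z B "transpose B *v z"] by simp
    also have "B *v (transpose B *v z) = 0" unfolding z_def by (metis z0 matrix_vector_mul_assoc)
    then have "z \<bullet> (B *v (transpose B *v z)) = 0" by (simp only: inner_zero_right)
    finally have Bz: "transpose B *v z = 0" by simp
    obtain t where t: "z = B *v t" using surjB by (metis UNIV_I image_iff)
    have "z \<bullet> z = (transpose B *v z) \<bullet> t"
      using dot_lmul_matrix[of z B t] t by simp
    then have "z = 0" using Bz by simp
    then show "x = y" by (simp add: z_def)
  qed
  then show ?thesis
    using matrix_left_invertible_injective invertible_left_inverse by blast
qed

lemma unif_bound:
  fixes S :: "real^'m^'m" and B :: "real^'c::finite^'m" and blk :: "'c \<Rightarrow> 'k::finite"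
  assumes psd: "\<And>u. 0 \<le> u \<bullet> (S *v u)" and symS: "transpose S = S"
    and tr: "\<And>l. (\<Sum>c\<in>{c. blk c = l}. column c B \<bullet> (S *v column c B)) \<le> \<alpha>"
    and surjB: "range ((*v) B) = UNIV"
  shows "S $ j $ j \<le> \<alpha> * (real CARD('k) * matrix_inv (B ** transpose B) $ j $ j)"
proof -
  define K where "K = real CARD('k)"
  have K0: "K > 0" unfolding K_def by simp
  define u where "u = (\<lambda>l::'k. 1 / K)"
  have wu: "weight u" unfolding weight_def u_def K_def by simp
  define G where "G = B ** transpose B"
  define H where "H = matrix_inv G"
  have GH: "G ** H = mat 1" "H ** G = mat 1"
    using inv_props[OF BBt_inv[OF surjB]] unfolding G_def H_def by auto
  have Nu: "Nmat B blk u *v v = (1 / K) *\<^sub>R (G *v v)" for v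
    unfolding Nmat_mv G_def BBt_mv u_def by (simp add: scaleR_sum_right)
  define X where "X = K *\<^sub>R H"
  have NX: "Nmat B blk u *v (X *v v) = v" for v
  proof -
    have "Nmat B blk u *v (X *v v) = (1 / K) *\<^sub>R (G *v (K *\<^sub>R (H *v v)))"
      unfolding Nu X_def by (simp add: scaleR_matrix_vector_assoc)
    also have "\<dots> = G *v (H *v v)" using K0 by (simp add: matrix_scaleR_vector_ac scaleR_matrix_vector_assoc[symmetric])
    also have "\<dots> = v" by (simp add: matrix_vector_mul_assoc GH)
    finally show ?thesis .
  qed
  have NXN: "Nmat B blk u ** X ** Nmat B blk u = Nmat B blk u"
    by (simp add: matrix_eq NX flip: matrix_vector_mul_assoc)
  have e: "axis j 1 \<in> range ((*v) (Nmat B blk u))" using NX by (metis rangeI)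
  have "S $ j $ j \<le> \<alpha> * (axis j 1 \<bullet> (X *v axis j 1))"
    using GL[OF psd symS tr wu e NXN] by (simp add: entry_inner)
  also have "axis j 1 \<bullet> (X *v axis j 1) = K * H $ j $ j"
    by (simp add: entry_inner X_def)
  finally show ?thesis unfolding K_def H_def G_def .
qed

lemma wplus_bound:
  fixes S :: "real^'m^'m" and B :: "real^'c::finite^'m" and blk :: "'c \<Rightarrow> 'k::finite"
  assumes psd: "\<And>u. 0 \<le> u \<bullet> (S *v u)" and symS: "transpose S = S"
    and tr: "\<And>l. (\<Sum>c\<in>{c. blk c = l}. column c B \<bullet> (S *v column c B)) \<le> \<alpha>"
    and surjB: "range ((*v) B) = UNIV"
  shows "S $ j $ j \<le> \<alpha> * pinv (Nmat B blk (w_plus B blk j)) $ j $ j"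
proof -
  define G where "G = B ** transpose B"
  define H where "H = matrix_inv G"
  have invG: "invertible G" unfolding G_def by (rule BBt_inv[OF surjB])
  have GH: "G ** H = mat 1" "H ** G = mat 1"
    using inv_props[OF invG] unfolding H_def by auto
  have Gpsd: "0 \<le> u \<bullet> (G *v u)" for u
    unfolding G_def BBt_mv by (simp add: inner_sum_right sum_nonneg inner_commute)
  have Hsym: "transpose H = H"
    using inv_sym_psd(1)[OF invG _ Gpsd] BBt_sym unfolding H_def G_def by blast
  define P where "P = transpose B ** H"
  have BP: "B ** P = mat 1" unfolding P_def using GH(1) by (simp add: G_def matrix_mul_assoc)
  have "penrose B P" unfolding penrose_def
  proof (intro conjI)
    show "B ** P ** B = B" using BP by simp
    show "P ** B ** P = P" using BP by (metis matrix_mul_assoc matrix_mul_rid)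
    show "transpose (B ** P) = B ** P" using BP by simp
    show "transpose (P ** B) = P ** B"
      unfolding P_def by (simp add: matrix_transpose_mul Hsym matrix_mul_assoc)
  qed
  then have pB: "pinv B = P" by (rule pinv_eq)
  define e where "e = (axis j 1 :: real^'m)"
  define h where "h = P *v e"
  have Bh: "B *v h = e" unfolding h_def by (simp add: matrix_vector_mul_assoc BP)
  define hn where "hn l = sqrt (\<Sum>c\<in>{c. blk c = l}. (h $ c)\<^sup>2)" for l
  have hn_eq: "hnorm B blk j = hn" unfolding hnorm_def hn_def h_def e_def pB by (simp add: fun_eq_iff)
  have hn0: "0 \<le> hn l" for l unfolding hn_def by (simp add: sum_nonneg)
  have hnc: "h $ c \<noteq> 0 \<Longrightarrow> 0 < hn (blk c)" for c
  proof -
    assume "h $ c \<noteq> 0"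
    then have "0 < (h $ c)\<^sup>2" by simp
    also have "(h $ c)\<^sup>2 \<le> (\<Sum>c'\<in>{c'. blk c' = blk c}. (h $ c')\<^sup>2)"
      by (rule member_le_sum) auto
    finally show ?thesis unfolding hn_def by simp
  qed
  define T where "T = (\<Sum>t\<in>UNIV. hn t)"
  have T0: "0 < T"
  proof (rule ccontr)
    assume "\<not> 0 < T"
    moreover have "0 \<le> T" unfolding T_def using hn0 by (simp add: sum_nonneg)
    ultimately have "T = 0" by linarith
    then have all0: "\<forall>t\<in>UNIV. hn t = 0" unfolding T_def using hn0 by (simp add: sum_nonneg_eq_0_iff)
    have "h $ c = 0" for c
    proof (rule ccontr)
      assume "h $ c \<noteq> 0"
      then have "0 < hn (blk c)" by (rule hnc)
      with all0 show False by simp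
    qed
    then have "h = 0" by (simp add: vec_eq_iff)
    then have "e = 0" using Bh by simp
    then show False unfolding e_def by (simp add: axis_eq_0_iff)
  qed
  have wp_eq: "w_plus B blk j = (\<lambda>l. hn l / T)" unfolding w_plus_def hn_eq T_def by simp
  have wp: "weight (w_plus B blk j)" unfolding weight_def wp_eq
    using T0 hn0 by (simp add: sum_divide_distrib[symmetric] T_def)
  have wpc: "h $ c \<noteq> 0 \<Longrightarrow> 0 < w_plus B blk j (blk c)" for c
    unfolding wp_eq using hnc T0 by simp
  define Nm where "Nm = Nmat B blk (w_plus B blk j)"
  define X where "X = pinv Nm"
  have pX: "penrose Nm X" unfolding X_def Nm_def by (rule pinv_sym[OF Nmat_sym])
  have NXN: "Nm ** X ** Nm = Nm" using pX unfolding penrose_def by simp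
  define z where "z = e - Nm *v (X *v e)"
  have NXsym: "transpose (Nm ** X) = Nm ** X" using pX unfolding penrose_def by simp
  have zN: "z \<bullet> (Nm *v v) = 0" for v
  proof -
    have "(Nm *v (X *v e)) \<bullet> (Nm *v v) = ((Nm ** X) *v e) \<bullet> (Nm *v v)"
      by (simp add: matrix_vector_mul_assoc)
    also have "\<dots> = e \<bullet> (transpose (Nm ** X) *v (Nm *v v))"
      using dot_lmul_matrix[of e "transpose (Nm ** X)" "Nm *v v"] by simp
    also have "transpose (Nm ** X) *v (Nm *v v) = (Nm ** X ** Nm) *v v"
      unfolding NXsym by (simp add: matrix_vector_mul_assoc)
    also have "\<dots> = Nm *v v" using NXN by simp
    finally show ?thesis unfolding z_def by (simp add: inner_diff_left)
  qed
  have Nz: "Nm *v z = 0"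
  proof -
    have "(Nm *v z) \<bullet> (Nm *v z) = z \<bullet> (Nm *v (Nm *v z))"
      unfolding Nm_def by (rule sym_mat_inner[OF Nmat_sym])
    also have "\<dots> = 0" by (rule zN)
    finally show ?thesis by simp
  qed
  have "0 = z \<bullet> (Nm *v z)" using Nz by simp
  also have "\<dots> = (\<Sum>c\<in>UNIV. w_plus B blk j (blk c) * (column c B \<bullet> z) * (column c B \<bullet> z))"
    unfolding Nm_def by (rule Nmat_inner)
  finally have sum0: "(\<Sum>c\<in>UNIV. w_plus B blk j (blk c) * (column c B \<bullet> z) * (column c B \<bullet> z)) = 0" by simp
  have terms0: "w_plus B blk j (blk c) * (column c B \<bullet> z) * (column c B \<bullet> z) = 0" for c
  proof -
    define F where "F c = w_plus B blk j (blk c) * (column c B \<bullet> z) * (column c B \<bullet> z)" for c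
    have nn: "0 \<le> F c" for c
      using wp unfolding weight_def F_def by (simp add: mult.assoc)
    have "sum F UNIV = 0" using sum0 unfolding F_def by simp
    then have "\<forall>c\<in>UNIV. F c = 0" using sum_nonneg_eq_0_iff[of UNIV F] nn by simp
    then show ?thesis unfolding F_def by simp
  qed
  have hz: "h $ c * (column c B \<bullet> z) = 0" for c
  proof (cases "h $ c = 0")
    case False
    then have "0 < w_plus B blk j (blk c)" by (rule wpc)
    then have "column c B \<bullet> z = 0" using terms0[of c] by simp
    then show ?thesis by simp
  qed simp
  have ez: "e \<bullet> z = 0"
  proof -
    have "e \<bullet> z = (\<Sum>c\<in>UNIV. h $ c * (column c B \<bullet> z))"
      unfolding Bh[symmetric] matrix_mult_sum[of B h]
      by (simp add: scalar_mult_eq_scaleR inner_sum_left)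
    also have "\<dots> = 0" by (simp only: hz sum.neutral_const)
    finally show ?thesis .
  qed
  have nz: "(Nm *v (X *v e)) \<bullet> z = 0"
    using sym_mat_inner[OF Nmat_sym[of B blk "w_plus B blk j"], of "X *v e" z] Nz unfolding Nm_def by simp
  have "z \<bullet> z = e \<bullet> z - (Nm *v (X *v e)) \<bullet> z" unfolding z_def by (simp add: inner_diff_left)
  then have "z = 0" using ez nz by simp
  then have "e = Nm *v (X *v e)" unfolding z_def by simp
  then have erange: "e \<in> range ((*v) Nm)" using rangeI[of "(*v) Nm" "X *v e"] by simp
  have "S $ j $ j \<le> \<alpha> * (e \<bullet> (X *v e))"
    using GL[OF psd symS tr wp erange[unfolded Nm_def] NXN[unfolded Nm_def]] unfolding e_def
    by (simp add: entry_inner Nm_def)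
  then show ?thesis unfolding e_def X_def Nm_def by (simp add: entry_inner)
qed

theorem theorem1:
  fixes f :: "'n::finite \<Rightarrow> real^'m::finite"
    and B :: "real^'c::finite^'m"
    and blk :: "'c \<Rightarrow> 'k::finite"
    and N :: nat
    and d0 dstar :: "'n \<Rightarrow> bool"
    and j k :: 'm
    and wj wk :: "'k \<Rightarrow> real"
  assumes "2 \<le> CARD('m)" "CARD('m) \<le> N" "N \<le> CARD('n)"
    and "span (range f) = UNIV"
    and "surj blk"
    and "range ((*v) B) = UNIV"
    and "\<forall>c. column c B \<noteq> 0"
    and "is_design N d0" "invertible (info_mat f d0)"
    and "Phi_optimal B blk f N dstar"
    and "is_w_star B blk j wj" "is_w_star B blk k wk"
  shows "\<bar>matrix_inv (info_mat f dstar) $ j $ k\<bar>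
        \<le> Phi B blk (info_mat f d0) * real CARD('k) *
           sqrt (matrix_inv (B ** transpose B) $ j $ j * matrix_inv (B ** transpose B) $ k $ k)
    \<and> \<bar>matrix_inv (info_mat f dstar) $ j $ k\<bar>
        \<le> Phi B blk (info_mat f d0) *
           sqrt (pinv (Nmat B blk (w_plus B blk j)) $ j $ j * pinv (Nmat B blk (w_plus B blk k)) $ k $ k)
    \<and> \<bar>matrix_inv (info_mat f dstar) $ j $ k\<bar>
        \<le> Phi B blk (info_mat f d0) *
           sqrt (pinv (Nmat B blk wj) $ j $ j * pinv (Nmat B blk wk) $ k $ k)"
proof -
  note a = assms
  define M where "M = info_mat f dstar"
  define S where "S = matrix_inv M"
  define \<alpha> where "\<alpha> = Phi B blk (info_mat f d0)"
  have invM: "invertible M" using a(10) unfolding Phi_optimal_def M_def by blast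
  have symS: "transpose S = S" unfolding S_def
    by (rule inv_sym_psd(1)[OF invM]) (auto simp: M_def info_sym info_psd)
  have psd: "\<And>u. 0 \<le> u \<bullet> (S *v u)" unfolding S_def
    by (rule inv_sym_psd(2)[OF invM]) (auto simp: M_def info_sym info_psd)
  have PhiM: "Phi B blk M \<le> \<alpha>" using a(10) a(8) a(9) unfolding Phi_optimal_def M_def \<alpha>_def by blast
  have tr: "(\<Sum>c\<in>{c. blk c = l}. column c B \<bullet> (S *v column c B)) \<le> \<alpha>" for l
  proof -
    have "block_trace B blk l M \<le> Phi B blk M"
      unfolding Phi_def by (rule Max_ge) auto
    then show ?thesis using PhiM unfolding block_trace_def S_def by linarith
  qed
  have a0: "0 \<le> \<alpha>"
  proof -
    have "0 \<le> (\<Sum>c\<in>{c. blk c = undefined}. column c B \<bullet> (S *v column c B))"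
      using psd by (simp add: sum_nonneg)
    then show ?thesis using tr[of undefined] by linarith
  qed
  define K where "K = real CARD('k)"
  define Gi where "Gi = matrix_inv (B ** transpose B)"
  have b1: "\<bar>S $ j $ k\<bar> \<le> \<alpha> * K * sqrt (Gi $ j $ j * Gi $ k $ k)"
  proof -
    have "\<bar>S $ j $ k\<bar> \<le> \<alpha> * sqrt ((K * Gi $ j $ j) * (K * Gi $ k $ k))"
      by (rule combine[OF psd symS a0 unif_bound[OF psd symS tr a(6)] unif_bound[OF psd symS tr a(6)],
           unfolded K_def[symmetric] Gi_def[symmetric]])
    also have "(K * Gi $ j $ j) * (K * Gi $ k $ k) = K\<^sup>2 * (Gi $ j $ j * Gi $ k $ k)"
      by (simp add: power2_eq_square algebra_simps)
    also have "sqrt (K\<^sup>2 * (Gi $ j $ j * Gi $ k $ k)) = K * sqrt (Gi $ j $ j * Gi $ k $ k)"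
      by (simp add: real_sqrt_mult K_def)
    finally show ?thesis by (simp add: mult.assoc)
  qed
  have b2: "\<bar>S $ j $ k\<bar> \<le> \<alpha> * sqrt (pinv (Nmat B blk (w_plus B blk j)) $ j $ j * pinv (Nmat B blk (w_plus B blk k)) $ k $ k)"
    by (rule combine[OF psd symS a0 wplus_bound[OF psd symS tr a(6)] wplus_bound[OF psd symS tr a(6)]])
  have wst: "S $ i $ i \<le> \<alpha> * pinv (Nmat B blk w) $ i $ i" if "is_w_star B blk i w" for i w
  proof -
    have w: "weight w" and e: "axis i 1 \<in> range ((*v) (Nmat B blk w))"
      using that unfolding is_w_star_def by auto
    have NXN: "Nmat B blk w ** pinv (Nmat B blk w) ** Nmat B blk w = Nmat B blk w"
      using pinv_sym[OF Nmat_sym] unfolding penrose_def by blast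
    show ?thesis using GL[OF psd symS tr w e NXN] by (simp add: entry_inner)
  qed
  have b3: "\<bar>S $ j $ k\<bar> \<le> \<alpha> * sqrt (pinv (Nmat B blk wj) $ j $ j * pinv (Nmat B blk wk) $ k $ k)"
    by (rule combine[OF psd symS a0 wst[OF a(11)] wst[OF a(12)]])
  show ?thesis using b1 b2 b3 unfolding S_def M_def \<alpha>_def K_def Gi_def by blast
qed

end
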